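(* Let $c>1$ and $\alpha>0$ be fixed. Then, as $N\to\infty$, $$\sum_{\substack{N<mp^a\le cN\\ p^a>N/\log^\alpha N}}\frac1{mp^a}=\frac{\alpha(\log c)(\log\log N)}{\log N}+O\!\left(\frac1{\log N}\right),$$ where the sum is over pairs $(m,p^a)$ with $m$ a positive integer, $p$ prime and $a\ge1$. Also, $$\sum_{\substack{N<mp\le cN\\ p>N/\log^\alpha N}}\frac1{mp}=\frac{\alpha(\log c)(\log\log N)}{\log N}+O\!\left(\frac1{\log N}\right),$$ the sum being over pairs $(m,p)$ with $m$ a positive integer and $p$ prime. *)

theory Defs
  imports "HOL-Analysis.Analysis" "HOL-Library.Landau_Symbols"
begin

text \<open>Sum over triples (m,p,a), m \<ge> 1, p prime, a \<ge> 1 (each prime power p^a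
  corresponds to a unique pair (p,a)), with N < m p^a \<le> cN and p^a > N / (log N)^alpha.\<close>
definition prime_power_sum :: "real \<Rightarrow> real \<Rightarrow> nat \<Rightarrow> real" where
  "prime_power_sum c \<alpha> N =
     (\<Sum>(m, p, a) \<in> {(m, p, a). m \<ge> 1 \<and> prime p \<and> a \<ge> 1 \<and>
          real N < real (m * p ^ a) \<and> real (m * p ^ a) \<le> c * real N \<and>
          real (p ^ a) > real N / (ln (real N)) powr \<alpha>}.
        1 / real (m * p ^ a))"

definition prime_sum :: "real \<Rightarrow> real \<Rightarrow> nat \<Rightarrow> real" where
  "prime_sum c \<alpha> N =
     (\<Sum>(m, p) \<in> {(m, p). m \<ge> 1 \<and> prime p \<and>
          real N < real (m * p) \<and> real (m * p) \<le> c * real N \<and>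
          real p > real N / (ln (real N)) powr \<alpha>}.
        1 / real (m * p))"

end

theory Submission
  imports Defs "HOL-Number_Theory.Number_Theory" "HOL-Real_Asymp.Real_Asymp"
begin

definition psi :: "nat \<Rightarrow> real" where "psi n = (\<Sum>d\<in>{1..n}. mangoldt d)"

lemma Suc_div_dvd: "(0::nat) < d \<Longrightarrow> Suc n div d = n div d + (if d dvd Suc n then 1 else 0)"
  by (auto simp: div_Suc dvd_eq_mod_eq_0)

lemma ln_fact_mangoldt:
  "n \<le> M \<Longrightarrow> ln (fact n :: real) = (\<Sum>d\<in>{1..M}. mangoldt d * real (n div d))"
proof (induction n)
  case 0
  then show ?case by simp
next
  case (Suc n)
  have "ln (fact (Suc n) :: real) = ln (real (Suc n)) + ln (fact n)"
    by (simp add: ln_mult del: of_nat_Suc)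
  also have "ln (real (Suc n)) = (\<Sum>d | d dvd Suc n. mangoldt d)"
    using mangoldt_sum[of "Suc n", where 'a=real] by simp
  also have "{d. d dvd Suc n} = {d\<in>{1..M}. d dvd Suc n}"
    using Suc.prems by (auto dest: dvd_imp_le intro: Suc_leI dvd_pos_nat)
  also have "(\<Sum>d\<in>{d\<in>{1..M}. d dvd Suc n}. mangoldt d) = (\<Sum>d\<in>{1..M}. mangoldt d * (if d dvd Suc n then 1 else 0))"
    by (subst sum.inter_filter) (auto intro!: sum.cong)
  also have "ln (fact n :: real) = (\<Sum>d\<in>{1..M}. mangoldt d * real (n div d))"
    using Suc by simp
  also have "(\<Sum>d\<in>{1..M}. mangoldt d * (if d dvd Suc n then 1 else 0)) + (\<Sum>d\<in>{1..M}. mangoldt d * real (n div d))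
     = (\<Sum>d\<in>{1..M}. mangoldt d * real (Suc n div d))"
    by (subst sum.distrib[symmetric], intro sum.cong refl) (auto simp: Suc_div_dvd algebra_simps)
  finally show ?case .
qed

lemma sum_Icc_split:
  fixes f :: "nat \<Rightarrow> 'a::comm_monoid_add"
  assumes "a \<le> b" shows "(\<Sum>d\<in>{1..b}. f d) = (\<Sum>d\<in>{1..a}. f d) + (\<Sum>d\<in>{a<..b}. f d)"
proof -
  have "{1..b} = {1..a} \<union> {a<..b}" using assms by auto
  moreover have "{1..a} \<inter> {a<..b} = {}" by auto
  ultimately show ?thesis by (simp add: sum.union_disjoint)
qed

lemma psi_mono: "m \<le> n \<Longrightarrow> psi m \<le> psi n"
  unfolding psi_def by (intro sum_mono2) (auto simp: mangoldt_nonneg)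

lemma psi_nonneg: "psi n \<ge> 0"
  unfolding psi_def by (intro sum_nonneg) (auto simp: mangoldt_nonneg)

lemma psi_double: "psi (2*k) - psi k \<le> 2 * real k * ln 2"
proof -
  have "psi (2*k) - psi k = (\<Sum>d\<in>{k<..2*k}. mangoldt d)"
    unfolding psi_def using sum_Icc_split[of k "2*k" "mangoldt :: nat \<Rightarrow> real"] by simp
  also have "\<dots> \<le> (\<Sum>d\<in>{1..2*k}. mangoldt d * (real ((2*k) div d) - 2 * real (k div d)))"
  proof -
    have "(\<Sum>d\<in>{k<..2*k}. mangoldt d) = (\<Sum>d\<in>{k<..2*k}. mangoldt d * (real ((2*k) div d) - 2 * real (k div d)))"
    proof (intro sum.cong refl)
      fix d assume d: "d \<in> {k<..2*k}"
      then have "(2*k) div d = 1" by (intro div_nat_eqI) auto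
      moreover have "k div d = 0" using d by auto
      ultimately show "mangoldt d = mangoldt d * (real ((2*k) div d) - 2 * real (k div d))" by simp
    qed
    also have "\<dots> \<le> (\<Sum>d\<in>{1..2*k}. mangoldt d * (real ((2*k) div d) - 2 * real (k div d)))"
    proof (intro sum_mono2)
      fix d assume "d \<in> {1..2*k} - {k<..2*k}"
      have "2 * (k div d) \<le> (2*k) div d"
      proof -
        have "2 * (k div d) * d \<le> 2 * k" using div_times_less_eq_dividend[of k d] by simp
        then have "(2 * (k div d) * d) div d \<le> (2*k) div d" by (rule div_le_mono)
        moreover have "d > 0" using \<open>d \<in> {1..2*k} - {k<..2*k}\<close> by auto
        ultimately show ?thesis by simp
      qed
      then have "real (2 * (k div d)) \<le> real ((2*k) div d)" by (simp only: of_nat_le_iff)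
      then show "0 \<le> mangoldt d * (real ((2*k) div d) - 2 * real (k div d))"
        by (intro mult_nonneg_nonneg mangoldt_nonneg) simp
    qed auto
    finally show ?thesis .
  qed
  also have "\<dots> = ln (fact (2*k)) - 2 * ln (fact k)"
    using ln_fact_mangoldt[of "2*k" "2*k"] ln_fact_mangoldt[of k "2*k"]
    by (simp add: sum_subtractf sum_distrib_left algebra_simps)
  also have "\<dots> = ln (real ((2*k) choose k))"
  proof -
    have "fact (2*k) = (fact k * fact k * ((2*k) choose k) :: real)"
      using binomial_fact_lemma[of k "2*k"] by (simp flip: of_nat_mult)  
    then show ?thesis by (simp add: ln_mult)
  qed
  also have "\<dots> \<le> ln (2 ^ (2*k))"
    using binomial_le_pow2[of "2*k" k] by (subst ln_le_cancel_iff) (auto simp flip: of_nat_le_iff)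
  also have "\<dots> = 2 * real k * ln 2" by (simp add: ln_realpow)
  finally show ?thesis .
qed

lemma psi_le: "psi n \<le> 4 * ln 2 * real n"
proof (induction n rule: less_induct)
  case (less n)
  have l2: "ln (2::real) > 0" by simp
  consider "n = 0" | "n = 1" | k where "n = 2*k" "k \<ge> 1" | k where "n = 2*k+1" "k \<ge> 1"
  proof -
    have "n = 0 \<or> n = 1 \<or> (\<exists>k. n = 2*k \<and> k \<ge> 1) \<or> (\<exists>k. n = 2*k+1 \<and> k \<ge> 1)" by presburger
    then show ?thesis using that by blast
  qed
  then show ?case
  proof cases
    case 1 then show ?thesis by (simp add: psi_def)
  next
    case 2 then show ?thesis by (simp add: psi_def)
  next
    case 3
    have "psi n \<le> psi k + 2 * real k * ln 2" using psi_double[of k] 3 by simp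
    also have "psi k \<le> 4 * ln 2 * real k" using less 3 by simp
    finally have "psi n \<le> 6 * (ln 2 * real k)" by (simp add: algebra_simps)
    moreover have "0 \<le> ln 2 * real k" using l2 by simp
    moreover have "4 * ln 2 * real n = 8 * (ln 2 * real k)" using 3 by simp
    ultimately show ?thesis by linarith
  next
    case 4
    have "psi n \<le> psi (2*(k+1))" using 4 by (intro psi_mono) simp
    also have "\<dots> \<le> psi (k+1) + 2 * real (k+1) * ln 2" using psi_double[of "k+1"] by simp
    also have "psi (k+1) \<le> 4 * ln 2 * real (k+1)" using less.IH[of "k+1"] 4 by simp
    finally have "psi n \<le> 6 * ln 2 * real (k+1)" by (simp add: algebra_simps)
    also have "\<dots> \<le> 4 * ln 2 * real n"
    proof -
      have "6 * real (k+1) \<le> 4 * real n" using 4 by simp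
      then show ?thesis using l2 by simp
    qed
    finally show ?thesis .
  qed
qed

lemma ln_fact_le: "ln (fact n :: real) \<le> real n * ln (real n)"
proof (induction n)
  case 0 then show ?case by simp
next
  case (Suc n)
  have "ln (fact (Suc n) :: real) = ln (real (Suc n)) + ln (fact n)"
    by (simp add: ln_mult del: of_nat_Suc)
  also have "\<dots> \<le> ln (real (Suc n)) + real n * ln (real (Suc n))"
  proof -
    have "real n * ln (real n) \<le> real n * ln (real (Suc n))"
      by (cases "n = 0") (auto intro!: mult_left_mono)
    then show ?thesis using Suc by simp
  qed
  also have "\<dots> = real (Suc n) * ln (real (Suc n))" by (simp add: algebra_simps)
  finally show ?case .
qed

lemma ln_fact_ge: "real n * ln (real n) - real n \<le> ln (fact n :: real)"
proof (induction n)
  case 0 then show ?case by simp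
next
  case (Suc n)
  have "real (Suc n) * ln (real (Suc n)) - real (Suc n) \<le> ln (real (Suc n)) + (real n * ln (real n) - real n)"
  proof (cases "n = 0")
    case False
    have "real (Suc n) = real n * (1 + 1 / real n)" using False by (simp add: field_simps)
    then have "ln (real (Suc n)) = ln (real n) + ln (1 + 1 / real n)"
    proof -
      have "1 + 1 / real n > 0" by (simp add: add_pos_nonneg)
      then show ?thesis using False \<open>real (Suc n) = _\<close> by (simp add: ln_mult del: of_nat_Suc)
    qed
    moreover have "ln (1 + 1 / real n) \<le> 1 / real n" by (rule ln_add_one_self_le_self) simp
    then have A: "real n * ln (1 + 1 / real n) \<le> real n * (1 / real n)" by (intro mult_left_mono) auto
    have B: "real n * (1 / real n) = 1" using False by simp
    have C: "real n * ln (real (Suc n)) = real n * ln (real n) + real n * ln (1 + 1 / real n)"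
      using \<open>ln (real (Suc n)) = _\<close> by (simp add: distrib_left)
    have "real n * ln (real (Suc n)) \<le> real n * ln (real n) + 1"
      using A B C by linarith
    then show ?thesis by (simp add: algebra_simps)
  qed simp
  also have "\<dots> \<le> ln (real (Suc n)) + ln (fact n)" using Suc by simp
  also have "\<dots> = ln (fact (Suc n))"
    by (simp add: ln_mult del: of_nat_Suc)
  finally show ?case .
qed

definition S :: "nat \<Rightarrow> real" where "S n = (\<Sum>d\<in>{1..n}. mangoldt d / real d)"

lemma real_div_bounds:
  assumes "d > 0"
  shows "real (n div d) \<le> real n / real d" "real n / real d - 1 \<le> real (n div d)"
proof -
  have e: "real (n div d) * real d + real (n mod d) = real n"
    using div_mult_mod_eq[of n d] by (metis of_nat_add of_nat_mult)
  have "n mod d < d" using assms by simp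
  then have m: "real (n mod d) < real d" by simp
  have d0: "real d > 0" using assms by simp
  have "real (n div d) * real d \<le> real n" using e by simp
  then show "real (n div d) \<le> real n / real d" using d0 by (simp add: field_simps)
  have "real n \<le> (real (n div d) + 1) * real d" using e m by (simp add: algebra_simps)
  then show "real n / real d - 1 \<le> real (n div d)" using d0 by (simp add: field_simps)
qed

lemma S_bounds:
  assumes "n \<ge> 1"
  shows "ln (real n) - 1 \<le> S n" "S n \<le> ln (real n) + 4 * ln 2"
proof -
  have n0: "real n > 0" using assms by simp
  have eq: "real n * S n = (\<Sum>d\<in>{1..n}. mangoldt d * (real n / real d))"
    unfolding S_def sum_distrib_left by (intro sum.cong) auto
  have lf: "ln (fact n :: real) = (\<Sum>d\<in>{1..n}. mangoldt d * real (n div d))"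
    by (rule ln_fact_mangoldt) simp
  have up: "ln (fact n :: real) \<le> real n * S n"
    unfolding lf eq by (intro sum_mono mult_left_mono real_div_bounds mangoldt_nonneg) auto
  have "real n * S n - psi n = (\<Sum>d\<in>{1..n}. mangoldt d * (real n / real d - 1))"
    unfolding eq psi_def by (simp add: sum_subtractf algebra_simps)
  also have "\<dots> \<le> ln (fact n)"
    unfolding lf by (intro sum_mono mult_left_mono real_div_bounds mangoldt_nonneg) auto
  finally have lo: "real n * S n \<le> ln (fact n) + psi n" by simp
  have "real n * (ln (real n) - 1) \<le> real n * S n"
    using up ln_fact_ge[of n] by (simp add: algebra_simps)
  then show "ln (real n) - 1 \<le> S n" using n0 by simp
  have "real n * S n \<le> real n * (ln (real n) + 4 * ln 2)"
    using lo ln_fact_le[of n] psi_le[of n] by (simp add: algebra_simps)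
  then show "S n \<le> ln (real n) + 4 * ln 2" using n0 by simp
qed


lemma harm_bounds:
  assumes "1 \<le> a" "a \<le> b"
  shows "ln (real b + 1) - ln (real a + 1) \<le> (\<Sum>m\<in>{a<..b}. 1 / real m) \<and>
         (\<Sum>m\<in>{a<..b}. 1 / real m) \<le> ln (real b) - ln (real a)"
  using assms(2)
proof (induction b rule: dec_induct)
  case base
  then show ?case by simp
next
  case (step b)
  have b1: "real b \<ge> 1" using step assms by simp
  have e: "{a<..Suc b} = insert (Suc b) {a<..b}" using step by auto
  have l1: "ln (real b + 2) - ln (real b + 1) \<le> 1 / (real b + 1)"
  proof -
    have eq: "(real b + 1) * (1 + 1 / (real b + 1)) = real b + 2" using b1 by (simp add: field_simps)
    have "ln (real b + 2) = ln ((real b + 1) * (1 + 1 / (real b + 1)))"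
      by (simp only: eq)
    also have "\<dots> = ln (real b + 1) + ln (1 + 1 / (real b + 1))"
    proof -
      have "1 + 1 / (real b + 1) > 0" by (simp add: add_pos_nonneg)
      then show ?thesis using b1 by (subst ln_mult) auto
    qed
    finally show ?thesis using ln_add_one_self_le_self[of "1 / (real b + 1)"] b1 by simp
  qed
  have l2: "1 / (real b + 1) \<le> ln (real b + 1) - ln (real b)"
  proof -
    have eq: "(real b + 1) * (1 + (- 1 / (real b + 1))) = real b" using b1 by (simp add: field_simps)
    have "ln (real b) = ln ((real b + 1) * (1 + (- 1 / (real b + 1))))"
      by (simp only: eq)
    also have "\<dots> = ln (real b + 1) + ln (1 + (- 1 / (real b + 1)))"
      using b1 by (subst ln_mult) (auto simp: field_simps)
    finally show ?thesis using ln_add_one_self_le_self2[of "- 1 / (real b + 1)"] b1 by (simp add: field_simps)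
  qed
  show ?case using step.IH l1 l2 unfolding e
    by (simp add: add.commute)
qed

definition Mset :: "real \<Rightarrow> nat \<Rightarrow> nat \<Rightarrow> nat set" where
  "Mset c N p = {m. real N < real (m*p) \<and> real (m*p) \<le> c * real N}"

definition H :: "real \<Rightarrow> nat \<Rightarrow> nat \<Rightarrow> real" where
  "H c N p = (\<Sum>m\<in>Mset c N p. 1 / real m)"

lemma Mset_eq:
  assumes "p > 0" "c \<ge> 0"
  shows "Mset c N p = {N div p<..nat \<lfloor>c * real N / real p\<rfloor>}"
proof -
  have "m \<in> Mset c N p \<longleftrightarrow> m \<in> {N div p<..nat \<lfloor>c * real N / real p\<rfloor>}" for m
  proof -
    have "real N < real (m*p) \<longleftrightarrow> N div p < m"
      using assms by (simp only: of_nat_less_iff div_less_iff_less_mult)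
    moreover have "real (m*p) \<le> c * real N \<longleftrightarrow> m \<le> nat \<lfloor>c * real N / real p\<rfloor>"
    proof -
      have "real (m*p) \<le> c * real N \<longleftrightarrow> real m \<le> c * real N / real p"
        using assms by (simp add: field_simps)
      also have "\<dots> \<longleftrightarrow> int m \<le> \<lfloor>c * real N / real p\<rfloor>" by (simp add: le_floor_iff)
      also have "\<dots> \<longleftrightarrow> m \<le> nat \<lfloor>c * real N / real p\<rfloor>"
        using assms by (subst le_nat_iff) auto
      finally show ?thesis .
    qed
    ultimately show ?thesis unfolding Mset_def by auto
  qed
  then show ?thesis by blast
qed

lemma finite_Mset: "p > 0 \<Longrightarrow> c \<ge> 0 \<Longrightarrow> finite (Mset c N p)"
  by (simp add: Mset_eq)

lemma H_near:
  assumes "c > 1" "1 \<le> p" "p \<le> N"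
  shows "\<bar>H c N p - ln c\<bar> \<le> 2 * real p / real N"
proof -
  define a where "a = N div p"
  define b where "b = nat \<lfloor>c * real N / real p\<rfloor>"
  define x where "x = real N / real p"
  have p0: "p > 0" using assms by simp
  have x1: "x \<ge> 1" using assms unfolding x_def by simp
  have ax: "real a \<le> x" "x - 1 \<le> real a" using real_div_bounds[OF p0, of N] unfolding a_def x_def by auto
  have a1: "a \<ge> 1" using assms unfolding a_def by (simp add: Suc_le_eq div_greater_zero_iff)
  have cx: "c * real N / real p = c * x" unfolding x_def by simp
  have bx: "real b \<le> c * x" "c * x < real b + 1"
    unfolding b_def cx using x1 assms(1) by (auto simp: of_nat_nat)
  have ab: "a \<le> b"
  proof -
    have "real a \<le> c * x" using ax x1 assms(1) by (smt (verit) mult_le_cancel_right1)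
    then have "int a \<le> \<lfloor>c * x\<rfloor>" by (simp add: le_floor_iff)
    then show ?thesis unfolding b_def cx by simp
  qed
  have Heq: "H c N p = (\<Sum>m\<in>{a<..b}. 1 / real m)"
    unfolding H_def Mset_eq[OF p0 less_imp_le[OF less_trans[OF zero_less_one assms(1)]]] a_def b_def by simp
  note hb = harm_bounds[OF a1 ab]
  have a0: "real a > 0" using a1 by simp
  have b0: "real b > 0" using a1 ab by simp
  have c0: "c > 0" using assms by simp
  have up: "H c N p \<le> ln c + 2 * real p / real N"
  proof -
    have 1: "H c N p \<le> ln (real b) - ln (real a)" using hb Heq by simp
    have 2: "ln (real b) \<le> ln (c * x)" using bx b0 by simp
    have 3: "ln (c * x) = ln c + ln x" using c0 x1 by (simp add: ln_mult)
    have 4: "ln x - ln (real a) = ln (x / real a)" using x1 a0 by (simp add: ln_div)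
    have 5: "ln (x / real a) \<le> x / real a - 1" using x1 a0 by (intro ln_le_minus_one) simp
    have 6: "x / real a - 1 \<le> 2 / x"
    proof -
      have "x \<le> real a + 1" using ax by simp
      then have "x / real a \<le> (real a + 1) / real a" using a0 by (intro divide_right_mono) auto
      also have "(real a + 1) / real a = 1 + 1 / real a" using a0 by (simp add: field_simps)
      finally have "x / real a - 1 \<le> 1 / real a" by simp
      also have "\<dots> \<le> 2 / x" using ax a1 a0 x1 by (simp add: field_simps)
      finally show ?thesis .
    qed
    have 7: "2 / x = 2 * real p / real N" unfolding x_def using p0 by simp
    show ?thesis using 1 2 3 4 5 6 7 by linarith
  qed
  have lo: "ln c - 2 * real p / real N \<le> H c N p"
  proof -
    have "ln (c * x) - ln (x + 1) \<le> ln (real b + 1) - ln (real a + 1)"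
      using bx ax x1 c0 by (intro diff_mono) auto
    also have "\<dots> \<le> H c N p" using hb Heq by simp
    finally have 1: "ln (c * x) - ln (x + 1) \<le> H c N p" .
    have "ln (x + 1) = ln x + ln (1 + 1 / x)"
    proof -
      have "x + 1 = x * (1 + 1 / x)" using x1 by (simp add: field_simps)
      moreover have "1 + 1 / x > 0" using x1 by (simp add: add_pos_nonneg)
      ultimately show ?thesis using x1 by (simp add: ln_mult)
    qed
    moreover have "ln (1 + 1 / x) \<le> 1 / x" using x1 by (intro ln_add_one_self_le_self) simp
    moreover have "ln (c * x) = ln c + ln x" using c0 x1 by (simp add: ln_mult)
    moreover have "1 / x \<le> 2 * real p / real N" unfolding x_def using p0 by (simp add: divide_right_mono)
    ultimately show ?thesis using 1 by linarith
  qed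
  show ?thesis using up lo by linarith
qed

lemma H_big:
  assumes "c > 1" "N < p"
  shows "0 \<le> H c N p" "H c N p \<le> c"
proof -
  have p0: "p > 0" using assms by simp
  show "0 \<le> H c N p" unfolding H_def by (intro sum_nonneg) auto
  have sub: "Mset c N p \<subseteq> {1..nat \<lfloor>c\<rfloor>}"
  proof
    fix m assume m: "m \<in> Mset c N p"
    then have "real N < real m * real p" "real m * real p \<le> c * real N" unfolding Mset_def by auto
    then have "m \<ge> 1" by (cases m) auto
    have "real m * real p \<le> c * real p"
      using \<open>real m * real p \<le> c * real N\<close> assms by (smt (verit) mult_left_mono of_nat_less_iff)
    then have "real m \<le> c" using p0 by simp
    then have "int m \<le> \<lfloor>c\<rfloor>" by (simp add: le_floor_iff)
    then show "m \<in> {1..nat \<lfloor>c\<rfloor>}" using \<open>m \<ge> 1\<close> by auto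
  qed
  have "H c N p \<le> (\<Sum>m\<in>{1..nat \<lfloor>c\<rfloor>}. 1 / real m)"
    unfolding H_def by (intro sum_mono2 sub) auto
  also have "\<dots> \<le> real (card {1..nat \<lfloor>c\<rfloor>}) * 1"
    by (intro sum_bounded_above) auto
  also have "\<dots> \<le> c" using assms by simp
  finally show "H c N p \<le> c" .
qed

definition Qset :: "real \<Rightarrow> nat set" where
  "Qset X = {d. real d \<le> X \<and> primepow d \<and> \<not> prime d}"

lemma pow_bounds:
  assumes "prime p" "k \<ge> 2" "real (p ^ k) \<le> X"
  shows "p \<le> nat \<lfloor>sqrt X\<rfloor>" "k \<le> nat \<lfloor>log 2 X\<rfloor>"
proof -
  have p2: "p \<ge> 2" using assms prime_ge_2_nat by blast
  have "p ^ 2 \<le> p ^ k" using assms p2 by (intro power_increasing) auto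
  then have "real p ^ 2 \<le> X" using assms by (metis of_nat_le_iff of_nat_power order.trans)
  then have "real p \<le> sqrt X" by (rule real_le_rsqrt)
  then have "int p \<le> \<lfloor>sqrt X\<rfloor>" by (simp add: le_floor_iff)
  then show "p \<le> nat \<lfloor>sqrt X\<rfloor>" by simp
  have "2 ^ k \<le> p ^ k" using p2 by (intro power_mono) auto
  then have "(2::real) ^ k \<le> X" using assms by (metis of_nat_le_iff of_nat_power order.trans of_nat_numeral)
  moreover have "(0::real) < 2 ^ k" by simp
  ultimately have X0: "X > 0" by linarith
  have "log 2 ((2::real) ^ k) \<le> log 2 X" using X0 \<open>(2::real) ^ k \<le> X\<close> by (subst log_le_cancel_iff) auto
  then have "real k \<le> log 2 X" by simp
  then have "int k \<le> \<lfloor>log 2 X\<rfloor>" by (simp add: le_floor_iff)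
  then show "k \<le> nat \<lfloor>log 2 X\<rfloor>" by simp
qed

lemma Qset_sub:
  "Qset X \<subseteq> (\<lambda>(p,k). p ^ k) ` ({..nat \<lfloor>sqrt X\<rfloor>} \<times> {..nat \<lfloor>log 2 X\<rfloor>})"
proof
  fix d assume "d \<in> Qset X"
  then obtain p k where pk: "prime p" "k > 0" "d = p ^ k" "real d \<le> X" "\<not> prime d"
    unfolding Qset_def primepow_def by blast
  have "k \<noteq> 1" using pk by auto
  then have "k \<ge> 2" using pk by simp
  then show "d \<in> (\<lambda>(p,k). p ^ k) ` ({..nat \<lfloor>sqrt X\<rfloor>} \<times> {..nat \<lfloor>log 2 X\<rfloor>})"
    using pow_bounds[OF pk(1) \<open>k \<ge> 2\<close>, of X] pk by force
qed

lemma finite_Qset: "finite (Qset X)"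
  by (rule finite_subset[OF Qset_sub]) auto

lemma card_Qset:
  assumes "X \<ge> 1"
  shows "real (card (Qset X)) \<le> (sqrt X + 1) * (log 2 X + 1)"
proof -
  have "card (Qset X) \<le> card ((\<lambda>(p,k). p ^ k) ` ({..nat \<lfloor>sqrt X\<rfloor>} \<times> {..nat \<lfloor>log 2 X\<rfloor>}))"
    by (intro card_mono Qset_sub) auto
  also have "\<dots> \<le> card ({..nat \<lfloor>sqrt X\<rfloor>} \<times> {..nat \<lfloor>log 2 X\<rfloor>})" by (rule card_image_le) auto
  also have "\<dots> = (nat \<lfloor>sqrt X\<rfloor> + 1) * (nat \<lfloor>log 2 X\<rfloor> + 1)" by (simp add: card_cartesian_product)
  finally have "real (card (Qset X)) \<le> (real (nat \<lfloor>sqrt X\<rfloor>) + 1) * (real (nat \<lfloor>log 2 X\<rfloor>) + 1)"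
    by (metis of_nat_le_iff of_nat_mult of_nat_Suc add.commute plus_1_eq_Suc)
  also have "\<dots> \<le> (sqrt X + 1) * (log 2 X + 1)"
  proof (intro mult_mono)
    have "sqrt X \<ge> 0" "log 2 X \<ge> 0" using assms by auto
    then show "real (nat \<lfloor>sqrt X\<rfloor>) + 1 \<le> sqrt X + 1" "real (nat \<lfloor>log 2 X\<rfloor>) + 1 \<le> log 2 X + 1"
      by (simp_all add: of_nat_nat)
    show "0 \<le> sqrt X + 1" using \<open>sqrt X \<ge> 0\<close> by simp
  qed auto
  finally show ?thesis .
qed

lemma S_diff: "u \<le> v \<Longrightarrow> S v - S u = (\<Sum>d\<in>{u<..v}. mangoldt d / real d)"
  unfolding S_def using sum_Icc_split[of u v "\<lambda>d. mangoldt d / real d"] by simp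

lemma primes_S_upper:
  assumes "u \<le> v"
  shows "(\<Sum>p\<in>{p. prime p \<and> u < p \<and> p \<le> v}. ln (real p) / real p) \<le> S v - S u"
proof -
  have "(\<Sum>p\<in>{p. prime p \<and> u < p \<and> p \<le> v}. ln (real p) / real p) =
        (\<Sum>p\<in>{p. prime p \<and> u < p \<and> p \<le> v}. mangoldt p / real p)"
    by (intro sum.cong) auto
  also have "\<dots> \<le> (\<Sum>d\<in>{u<..v}. mangoldt d / real d)"
    by (intro sum_mono2) (auto simp: mangoldt_nonneg)
  finally show ?thesis using S_diff[OF assms] by simp
qed

lemma primes_S_lower:
  assumes "u \<le> v"
  shows "S v - S u \<le> (\<Sum>p\<in>{p. prime p \<and> u < p \<and> p \<le> v}. ln (real p) / real p)
            + real (card (Qset (real v))) * ln (real v) / (real u + 1)"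
proof -
  define Pr where "Pr = {p. prime p \<and> u < p \<and> p \<le> v}"
  define Q where "Q = {d\<in>{u<..v}. primepow d \<and> \<not> prime d}"
  have PrI: "Pr \<subseteq> {u<..v}" unfolding Pr_def by auto
  have "S v - S u = (\<Sum>d\<in>{u<..v}. mangoldt d / real d)" using S_diff[OF assms] .
  also have "\<dots> = (\<Sum>d\<in>Pr. mangoldt d / real d) + (\<Sum>d\<in>{u<..v} - Pr. mangoldt d / real d)"
    using PrI by (subst sum.subset_diff[of Pr]) auto
  also have "(\<Sum>d\<in>Pr. mangoldt d / real d) = (\<Sum>p\<in>Pr. ln (real p) / real p)"
    unfolding Pr_def by (intro sum.cong) auto
  also have "(\<Sum>d\<in>{u<..v} - Pr. mangoldt d / real d) = (\<Sum>d\<in>Q. mangoldt d / real d)"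
    by (intro sum.mono_neutral_right) (auto simp: Q_def Pr_def mangoldt_def)
  also have "\<dots> \<le> (\<Sum>d\<in>Q. ln (real v) / (real u + 1))"
  proof (intro sum_mono)
    fix d assume d: "d \<in> Q"
    then have d1: "d \<ge> 1" "d \<le> v" "real u + 1 \<le> real d" unfolding Q_def by auto
    have "mangoldt d \<le> ln (real d)" using d1 by (intro mangoldt_le) auto
    also have "\<dots> \<le> ln (real v)" using d1 by simp
    finally have m: "mangoldt d \<le> ln (real v)" .
    have "mangoldt d / real d \<le> ln (real v) / real d" using m d1 by (intro divide_right_mono) auto
    also have "\<dots> \<le> ln (real v) / (real u + 1)"
      using d1 by (intro divide_left_mono) auto
    finally show "mangoldt d / real d \<le> ln (real v) / (real u + 1)" .
  qed
  also have "\<dots> = real (card Q) * (ln (real v) / (real u + 1))" by simp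
  also have "\<dots> \<le> real (card (Qset (real v))) * (ln (real v) / (real u + 1))"
  proof (intro mult_right_mono)
    have "Q \<subseteq> Qset (real v)" unfolding Q_def Qset_def by auto
    then show "real (card Q) \<le> real (card (Qset (real v)))"
      using finite_Qset by (simp add: card_mono)
    show "0 \<le> ln (real v) / (real u + 1)" using assms by (cases "v = 0") auto
  qed
  finally show ?thesis unfolding Pr_def by simp
qed


lemma prime_sum_eq:
  assumes "c > 1"
  shows "prime_sum c \<alpha> N = (\<Sum>p\<in>{p. prime p \<and> real N / ln (real N) powr \<alpha> < real p \<and> real p \<le> c * real N}. H c N p / real p)"
proof -
  define y where "y = real N / ln (real N) powr \<alpha>"
  define P where "P = {p. prime p \<and> y < real p \<and> real p \<le> c * real N}"
  define A where "A = {(m, p). m \<ge> 1 \<and> prime p \<and>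
          real N < real (m * p) \<and> real (m * p) \<le> c * real N \<and> real p > y}"
  have c0: "c \<ge> 0" using assms by simp
  have finP: "finite P"
  proof (rule finite_subset)
    show "P \<subseteq> {..nat \<lceil>c * real N\<rceil>}"
    proof
      fix p assume "p \<in> P"
      then have "real p \<le> c * real N" unfolding P_def by auto
      then have "real p \<le> real (nat \<lceil>c * real N\<rceil>)" by linarith
      then show "p \<in> {..nat \<lceil>c * real N\<rceil>}" by (simp only: of_nat_le_iff atMost_iff)
    qed
  qed auto
  have Aeq: "A = (\<lambda>(p,m). (m,p)) ` (SIGMA p:P. Mset c N p)"
  proof (intro equalityI subsetI)
    fix x assume "x \<in> A"
    then obtain m p where x: "x = (m,p)" "m \<ge> 1" "prime p" "real N < real (m * p)"
       "real (m * p) \<le> c * real N" "real p > y" unfolding A_def by auto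
    have "p \<le> m * p" using x by simp
    then have "real p \<le> real (m * p)" by (simp only: of_nat_le_iff)
    then have "p \<in> P" using x unfolding P_def by auto
    moreover have "m \<in> Mset c N p" using x unfolding Mset_def by auto
    ultimately show "x \<in> (\<lambda>(p,m). (m,p)) ` (SIGMA p:P. Mset c N p)" using x by force
  next
    fix x assume "x \<in> (\<lambda>(p,m). (m,p)) ` (SIGMA p:P. Mset c N p)"
    then obtain m p where x: "x = (m,p)" "p \<in> P" "m \<in> Mset c N p" by auto
    then have "m \<noteq> 0" unfolding Mset_def by (cases m) auto
    then show "x \<in> A" using x unfolding A_def P_def Mset_def by auto
  qed
  have "prime_sum c \<alpha> N = (\<Sum>(m,p)\<in>A. 1 / real (m * p))"
    unfolding prime_sum_def A_def y_def by simp
  also have "\<dots> = (\<Sum>(p,m)\<in>(SIGMA p:P. Mset c N p). 1 / real (m * p))"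
    unfolding Aeq by (subst sum.reindex) (auto simp: inj_on_def intro!: sum.cong)
  also have "\<dots> = (\<Sum>p\<in>P. \<Sum>m\<in>Mset c N p. 1 / real (m * p))"
    by (subst sum.Sigma) (use finP in \<open>auto simp: finite_Mset c0 P_def prime_gt_0_nat\<close>)
  also have "\<dots> = (\<Sum>p\<in>P. H c N p / real p)"
    unfolding H_def by (intro sum.cong refl) (simp add: sum_divide_distrib)
  finally show ?thesis unfolding P_def y_def .
qed

lemma ln2_le1: "ln (2::real) \<le> 1"
  using ln_le_minus_one[of "2::real"] by simp

lemma prime_sum_bound:
  assumes c: "c > 1" and a: "\<alpha> > 0"
  and e0: "ln (real N) \<ge> 1"
  and y2: "real N / ln (real N) powr \<alpha> \<ge> 2"
  and e1: "\<alpha> * ln (ln (real N)) \<le> ln (real N) / 2"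
  and e2: "\<alpha>^2 * ln (ln (real N))^2 \<le> ln (real N)"
  and e3: "ln (real N) * (sqrt (real N) + 1) * (log 2 (real N) + 1) / (real N / ln (real N) powr \<alpha>) \<le> 1"
  shows "\<bar>prime_sum c \<alpha> N - \<alpha> * ln c * ln (ln (real N)) / ln (real N)\<bar>
           \<le> (14 * ln c + 16 + c * (ln c + 5)) / ln (real N)"
proof -
  define L where "L = ln (real N)"
  define y where "y = real N / L powr \<alpha>"
  define u where "u = \<alpha> * ln L"
  define Y where "Y = nat \<lfloor>y\<rfloor>"
  define Bc where "Bc = nat \<lfloor>c * real N\<rfloor>"
  have L1: "L \<ge> 1" using e0 unfolding L_def .
  have N0: "real N > 0" using L1 unfolding L_def by (cases "N = 0") auto
  have N1: "N \<ge> 1" using N0 by simp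
  have Lpow: "L powr \<alpha> \<ge> 1" using L1 a by (intro ge_one_powr_ge_zero) auto
  have lny: "ln y = L - u"
    unfolding y_def u_def using N0 Lpow L1 by (simp add: ln_div ln_powr L_def)
  have e1': "u \<le> L / 2" using e1 unfolding u_def L_def .
  have e2': "u * u \<le> L" using e2 unfolding u_def L_def by (simp add: power2_eq_square algebra_simps)
  have y2': "y \<ge> 2" using y2 unfolding y_def L_def .
  have lny2: "ln y \<ge> L / 2" using lny e1' by simp
  have lnypos: "ln y > 0" using lny2 L1 by simp
  have yN: "y \<le> real N" unfolding y_def using Lpow N0 by (simp add: divide_le_eq)
  have Yy: "real Y \<le> y" "y < real Y + 1" unfolding Y_def using y2' by (auto simp: of_nat_nat)
  have YN: "Y \<le> N" using Yy yN by linarith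
  have Y1: "Y \<ge> 1" using Yy y2' by linarith
  have lnY: "ln (real Y) \<ge> ln y - ln 2"
  proof -
    have "y / 2 \<le> real Y" using Yy y2' by linarith
    then have "ln (y / 2) \<le> ln (real Y)" using y2' by simp
    then show ?thesis using y2' by (simp add: ln_div)
  qed
  have lnY2: "ln (real Y) \<le> ln y" using Yy Y1 by simp
  have l2: "ln (2::real) \<le> 1" "ln (2::real) > 0" using ln2_le1 by auto
  have lnc: "ln c > 0" using c by simp
  have NBc: "N \<le> Bc"
  proof -
    have "real N \<le> c * real N" using c N0 by simp
    then have "int N \<le> \<lfloor>c * real N\<rfloor>" by (simp add: le_floor_iff)
    then show ?thesis unfolding Bc_def by simp
  qed
  have lnBc: "ln (real Bc) \<le> ln c + L"
  proof -
    have "real Bc \<le> c * real N" unfolding Bc_def using c N0 by (simp add: of_nat_nat)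
    then have "ln (real Bc) \<le> ln (c * real N)" using NBc N1 by simp
    also have "\<dots> = ln c + L" unfolding L_def using c N0 by (simp add: ln_mult)
    finally show ?thesis .
  qed
  define P1 where "P1 = {p. prime p \<and> Y < p \<and> p \<le> N}"
  define P2 where "P2 = {p. prime p \<and> N < p \<and> p \<le> Bc}"
  have finP1: "finite P1" unfolding P1_def by (rule finite_subset[of _ "{..N}"]) auto
  have finP2: "finite P2" unfolding P2_def by (rule finite_subset[of _ "{..Bc}"]) auto
  have P1_ge: "real p > y" "p \<ge> 1" "p \<le> N" if "p \<in> P1" for p
  proof -
    show "real p > y" using that Yy unfolding P1_def by (smt (verit) mem_Collect_eq of_nat_1 of_nat_add of_nat_le_iff Suc_le_eq plus_1_eq_Suc)
    show "p \<ge> 1" "p \<le> N" using that unfolding P1_def by (auto simp: prime_ge_1_nat)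
  qed
  have Peq: "{p. prime p \<and> y < real p \<and> real p \<le> c * real N} = P1 \<union> P2"
  proof (intro equalityI subsetI)
    fix p assume p: "p \<in> {p. prime p \<and> y < real p \<and> real p \<le> c * real N}"
    show "p \<in> P1 \<union> P2"
    proof (cases "p \<le> N")
      case True
      have "real Y < real p" using p Yy by auto
      then show ?thesis using True p unfolding P1_def by auto
    next
      case False
      have "int p \<le> \<lfloor>c * real N\<rfloor>" using p by (simp add: le_floor_iff)
      then have "p \<le> Bc" unfolding Bc_def by simp
      then show ?thesis using False p unfolding P2_def by auto
    qed
  next
    fix p assume p: "p \<in> P1 \<union> P2"
    then show "p \<in> {p. prime p \<and> y < real p \<and> real p \<le> c * real N}"
    proof
      assume p1: "p \<in> P1"
      have "real p \<le> real N" using P1_ge[OF p1] by simp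
      also have "\<dots> \<le> c * real N" using c N0 by simp
      finally show ?thesis using P1_ge[OF p1] p1 unfolding P1_def by auto
    next
      assume p2: "p \<in> P2"
      have "real p \<le> real Bc" using p2 unfolding P2_def by auto
      also have "\<dots> \<le> c * real N" unfolding Bc_def using c N0 by (simp add: of_nat_nat)
      finally show ?thesis using p2 yN unfolding P2_def by auto
    qed
  qed
  have disj: "P1 \<inter> P2 = {}" unfolding P1_def P2_def by auto
  have ps: "prime_sum c \<alpha> N = (\<Sum>p\<in>P1. H c N p / real p) + (\<Sum>p\<in>P2. H c N p / real p)"
    unfolding prime_sum_eq[OF c] L_def[symmetric] y_def[symmetric] Peq
    using finP1 finP2 disj by (simp add: sum.union_disjoint)

  define T where "T = (\<Sum>p\<in>P1. ln (real p) / real p)"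
  have SN: "L - 1 \<le> S N" "S N \<le> L + 4 * ln 2" using S_bounds[OF N1] unfolding L_def by auto
  have SY: "ln (real Y) - 1 \<le> S Y" "S Y \<le> ln (real Y) + 4 * ln 2" using S_bounds[OF Y1] by auto
  have T_up: "T \<le> u + 6"
  proof -
    have "T \<le> S N - S Y" unfolding T_def P1_def by (rule primes_S_upper[OF YN])
    then show ?thesis using SN SY lnY lny l2 by linarith
  qed
  have T_lo: "T \<ge> u - 6"
  proof -
    have 1: "S N - S Y \<le> T + real (card (Qset (real N))) * ln (real N) / (real Y + 1)"
      unfolding T_def P1_def by (rule primes_S_lower[OF YN])
    have "real (card (Qset (real N))) * ln (real N) / (real Y + 1)
           \<le> (sqrt (real N) + 1) * (log 2 (real N) + 1) * L / y"
    proof -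
      have "real (card (Qset (real N))) \<le> (sqrt (real N) + 1) * (log 2 (real N) + 1)"
        using N1 by (intro card_Qset) simp
      then have "real (card (Qset (real N))) * L \<le> (sqrt (real N) + 1) * (log 2 (real N) + 1) * L"
        using L1 by (intro mult_right_mono) auto
      moreover have "0 \<le> real (card (Qset (real N))) * L" using L1 by simp
      ultimately show ?thesis unfolding L_def[symmetric] using Yy y2'
        by (intro frac_le) auto
    qed
    also have "\<dots> \<le> 1" using e3 unfolding L_def y_def by (simp add: algebra_simps)
    finally have 2: "real (card (Qset (real N))) * ln (real N) / (real Y + 1) \<le> 1" .
    show ?thesis using 1 2 SN SY lnY2 lny l2 by linarith
  qed

  define R where "R = (\<Sum>p\<in>P1. 1 / real p)"
  have R_lo: "T / L \<le> R"
  proof -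
    have "T / L = (\<Sum>p\<in>P1. ln (real p) / real p / L)" unfolding T_def by (simp add: sum_divide_distrib)
    also have "\<dots> \<le> R" unfolding R_def
    proof (intro sum_mono)
      fix p assume p: "p \<in> P1"
      have "ln (real p) \<le> L" unfolding L_def using P1_ge[OF p] by simp
      then have "ln (real p) / L \<le> 1" using L1 by simp
      then have "ln (real p) / L / real p \<le> 1 / real p" using P1_ge[OF p] by (intro divide_right_mono) auto
      then show "ln (real p) / real p / L \<le> 1 / real p" by (simp add: field_simps)
    qed
    finally show ?thesis .
  qed
  have R_up: "R \<le> T / ln y"
  proof -
    have "R \<le> (\<Sum>p\<in>P1. ln (real p) / real p / ln y)" unfolding R_def
    proof (intro sum_mono)
      fix p assume p: "p \<in> P1"
      have "ln y < ln (real p)" using P1_ge[OF p] y2' by simp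
      then have "1 \<le> ln (real p) / ln y" using lnypos by simp
      then have "1 / real p \<le> ln (real p) / ln y / real p" using P1_ge[OF p] by (intro divide_right_mono) auto
      then show "1 / real p \<le> ln (real p) / real p / ln y" by (simp add: field_simps)
    qed
    also have "\<dots> = T / ln y" unfolding T_def by (simp add: sum_divide_distrib)
    finally show ?thesis .
  qed
  have R_bound: "\<bar>R - u / L\<bar> \<le> 14 / L"
  proof -
    have "R \<ge> (u - 6) / L" using R_lo T_lo L1 by (smt (verit) divide_right_mono)
    then have lo: "R - u / L \<ge> - 6 / L" by (simp add: diff_divide_distrib)
    have "R \<le> (u + 6) / (L - u)" using R_up T_up lnypos lny by (metis divide_right_mono less_imp_le order.trans)
    also have "(u + 6) / (L - u) \<le> (u + 14) / L"
    proof -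
      have pos: "L - u > 0" using lnypos lny by simp
      have "(u+14)*(L-u) - (u+6)*L = 8*L - u*u - 14*u" by (simp add: algebra_simps)
      then have ineq: "(u+6)*L \<le> (u+14)*(L-u)" using e1' e2' by linarith
      show ?thesis using pos L1 ineq by (simp add: divide_simps)
    qed
    finally have "R - u / L \<le> 14 / L" by (simp add: add_divide_distrib)
    then show ?thesis using lo L1 by (simp add: abs_le_iff)
  qed

  define E1 where "E1 = (\<Sum>p\<in>P1. (H c N p - ln c) / real p)"
  have sum1: "(\<Sum>p\<in>P1. H c N p / real p) = ln c * R + E1"
    unfolding E1_def R_def by (simp add: sum_distrib_left diff_divide_distrib sum_subtractf)
  have cardP1: "real (card P1) * ln y \<le> psi N"
  proof -
    have "real (card P1) * ln y = (\<Sum>p\<in>P1. ln y)" by simp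
    also have "\<dots> \<le> (\<Sum>p\<in>P1. mangoldt p)"
    proof (intro sum_mono)
      fix p assume p: "p \<in> P1"
      have "ln y \<le> ln (real p)" using P1_ge[OF p] y2' by simp
      then show "ln y \<le> mangoldt p" using p unfolding P1_def by simp
    qed
    also have "\<dots> \<le> psi N" unfolding psi_def
      by (intro sum_mono2) (auto simp: P1_def mangoldt_nonneg prime_ge_1_nat)
    finally show ?thesis .
  qed
  have E1_bound: "\<bar>E1\<bar> \<le> 16 / L"
  proof -
    have "\<bar>E1\<bar> \<le> (\<Sum>p\<in>P1. \<bar>(H c N p - ln c) / real p\<bar>)" unfolding E1_def by (rule sum_abs)
    also have "\<dots> \<le> (\<Sum>p\<in>P1. 2 / real N)"
    proof (intro sum_mono)
      fix p assume p: "p \<in> P1"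
      have pp: "real p > 0" using P1_ge[OF p] by simp
      have "\<bar>H c N p - ln c\<bar> \<le> 2 * real p / real N" using H_near[OF c] P1_ge[OF p] by auto
      then have "\<bar>H c N p - ln c\<bar> / real p \<le> 2 * real p / real N / real p" using pp by (intro divide_right_mono) auto
      then show "\<bar>(H c N p - ln c) / real p\<bar> \<le> 2 / real N" using pp by (simp add: abs_divide)
    qed
    also have "\<dots> = 2 * real (card P1) / real N" by simp
    also have "\<dots> \<le> 2 * (psi N / ln y) / real N"
    proof -
      have "real (card P1) \<le> psi N / ln y" using cardP1 lnypos by (simp add: field_simps)
      then show ?thesis using N0 by (intro divide_right_mono) auto
    qed
    also have "\<dots> \<le> 2 * (4 * ln 2 * real N / (L / 2)) / real N"
    proof -
      have "psi N / ln y \<le> 4 * ln 2 * real N / (L / 2)"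
        using psi_le[of N] lny2 L1 psi_nonneg[of N] by (intro frac_le) auto
      then show ?thesis using N0 by (intro divide_right_mono mult_left_mono) auto
    qed
    also have "\<dots> = 16 * ln 2 / L" using N0 L1 by (simp add: field_simps)
    also have "\<dots> \<le> 16 / L" using l2 L1 by (simp add: divide_right_mono)
    finally show ?thesis .
  qed

  define E2 where "E2 = (\<Sum>p\<in>P2. H c N p / real p)"
  have E2_nonneg: "E2 \<ge> 0" unfolding E2_def
    by (intro sum_nonneg divide_nonneg_nonneg H_big(1)[OF c]) (auto simp: P2_def)
  have E2_bound: "E2 \<le> c * (ln c + 5) / L"
  proof -
    have "E2 \<le> (\<Sum>p\<in>P2. c * (ln (real p) / real p / L))" unfolding E2_def
    proof (intro sum_mono)
      fix p assume p: "p \<in> P2"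
      have pN: "N < p" using p unfolding P2_def by auto
      have pp: "real p > 0" using pN by simp
      have "L \<le> ln (real p)" using pN N0 unfolding L_def by simp
      then have "1 \<le> ln (real p) / L" using L1 by simp
      then have "1 / real p \<le> ln (real p) / L / real p" using pp by (intro divide_right_mono) auto
      then have i: "1 / real p \<le> ln (real p) / real p / L" by (simp add: field_simps)
      have "H c N p / real p \<le> c / real p" using H_big[OF c pN] pp by (intro divide_right_mono) auto
      also have "\<dots> = c * (1 / real p)" by simp
      also have "\<dots> \<le> c * (ln (real p) / real p / L)" using i c by (intro mult_left_mono) auto
      finally show "H c N p / real p \<le> c * (ln (real p) / real p / L)" .
    qed
    also have "\<dots> = c * (\<Sum>p\<in>P2. ln (real p) / real p) / L" by (simp add: sum_distrib_left sum_divide_distrib)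
    also have "\<dots> \<le> c * (S Bc - S N) / L"
      unfolding P2_def using primes_S_upper[OF NBc] c L1 by (intro divide_right_mono mult_left_mono) auto
    also have "\<dots> \<le> c * (ln c + 5) / L"
    proof -
      have "S Bc \<le> ln (real Bc) + 4 * ln 2" using S_bounds[of Bc] NBc N1 by auto
      then have "S Bc - S N \<le> ln c + 5" using SN lnBc l2 by linarith
      then show ?thesis using c L1 by (intro divide_right_mono mult_left_mono) auto
    qed
    finally show ?thesis .
  qed

  have main: "\<alpha> * ln c * ln (ln (real N)) / ln (real N) = ln c * (u / L)"
    unfolding u_def L_def by simp
  have eq: "prime_sum c \<alpha> N - ln c * (u / L) = ln c * (R - u / L) + E1 + E2"
    using ps sum1 unfolding E2_def by (simp add: algebra_simps)
  have ab: "\<bar>ln c * (R - u / L)\<bar> = ln c * \<bar>R - u / L\<bar>" using lnc by (simp add: abs_mult)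
  have "\<bar>prime_sum c \<alpha> N - ln c * (u / L)\<bar> \<le> ln c * \<bar>R - u / L\<bar> + \<bar>E1\<bar> + \<bar>E2\<bar>"
    using abs_triangle_ineq[of "ln c * (R - u/L) + E1" E2] abs_triangle_ineq[of "ln c * (R - u/L)" E1] ab eq
    by linarith
  also have "\<dots> \<le> ln c * (14 / L) + 16 / L + c * (ln c + 5) / L"
    using R_bound E1_bound E2_bound E2_nonneg lnc
    by (intro add_mono mult_left_mono) auto
  also have "\<dots> = (14 * ln c + 16 + c * (ln c + 5)) / L" using L1 by (simp add: field_simps)
  finally show ?thesis unfolding main L_def .
qed


lemma pps_diff:
  assumes c: "c > 1" and a: "\<alpha> > 0" and e0: "ln (real N) \<ge> 1"
  and e5: "(c * ln (real N) powr \<alpha> + 1) * (sqrt (c * real N) + 1) * (log 2 (c * real N) + 1) / real N \<le> 1 / ln (real N)"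
  shows "\<bar>prime_power_sum c \<alpha> N - prime_sum c \<alpha> N\<bar> \<le> 1 / ln (real N)"
proof -
  define L where "L = ln (real N)"
  define y where "y = real N / L powr \<alpha>"
  have L1: "L \<ge> 1" using e0 unfolding L_def .
  have N0: "real N > 0" using L1 unfolding L_def by (cases "N = 0") auto
  have Lpow: "L powr \<alpha> \<ge> 1" using L1 a by (intro ge_one_powr_ge_zero) auto
  have y0: "y > 0" unfolding y_def using N0 Lpow by (intro divide_pos_pos) auto
  define Bc where "Bc = nat \<lfloor>c * real N\<rfloor>"
  define Ts where "Ts = {(m, p, a). m \<ge> 1 \<and> prime p \<and> a \<ge> 1 \<and>
          real N < real (m * p ^ a) \<and> real (m * p ^ a) \<le> c * real N \<and>
          real (p ^ a) > y}"
  define As where "As = {(m, p). m \<ge> 1 \<and> prime p \<and>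
          real N < real (m * p) \<and> real (m * p) \<le> c * real N \<and>
          real p > y}"
  define T1 where "T1 = {t\<in>Ts. snd (snd t) = 1}"
  define T2 where "T2 = {t\<in>Ts. snd (snd t) \<noteq> 1}"
  have le_Bc: "x \<le> Bc" if "real x \<le> c * real N" for x
  proof -
    have "int x \<le> \<lfloor>c * real N\<rfloor>" using that by (simp add: le_floor_iff)
    then show ?thesis unfolding Bc_def by simp
  qed
  have finTs: "finite Ts"
  proof (rule finite_subset)
    show "Ts \<subseteq> {..Bc} \<times> {..Bc} \<times> {..Bc}"
    proof safe
      fix m p a assume t: "(m, p, a) \<in> Ts"
      then have pr: "prime p" and m1: "m \<ge> 1" and le: "real (m * p ^ a) \<le> c * real N"
        unfolding Ts_def by auto
      have p2: "p \<ge> 2" using pr prime_ge_2_nat by blast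
      have pa: "p ^ a \<ge> 1" using p2 by simp
      have "m \<le> m * p ^ a" using pa by simp
      then have "real m \<le> real (m * p ^ a)" by (simp only: of_nat_le_iff)
      then show "m \<le> Bc" using le_Bc[of m] le by simp
      have a1: "a \<ge> 1" using t unfolding Ts_def by auto
      have "p \<le> p ^ a" using p2 a1 by (intro self_le_power) auto
      also have "\<dots> \<le> m * p ^ a" using m1 by simp
      finally have "p \<le> m * p ^ a" .
      then have "real p \<le> real (m * p ^ a)" by (simp only: of_nat_le_iff)
      then show "p \<le> Bc" using le_Bc[of p] le by simp
      have "a < 2 ^ a" by (rule less_exp)
      also have "2 ^ a \<le> p ^ a" using p2 by (intro power_mono) auto
      also have "\<dots> \<le> m * p ^ a" using m1 by simp
      finally have "a \<le> m * p ^ a" by simp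
      then have "real a \<le> real (m * p ^ a)" by (simp only: of_nat_le_iff)
      then show "a \<le> Bc" using le_Bc[of a] le by simp
    qed
  qed auto
  have pps: "prime_power_sum c \<alpha> N = (\<Sum>(m,p,a)\<in>Ts. 1 / real (m * p ^ a))"
    unfolding prime_power_sum_def Ts_def y_def L_def by simp
  have psd: "prime_sum c \<alpha> N = (\<Sum>(m,p)\<in>As. 1 / real (m * p))"
    unfolding prime_sum_def As_def y_def L_def by simp
  have split: "(\<Sum>(m,p,a)\<in>Ts. 1 / real (m * p ^ a)) = (\<Sum>(m,p,a)\<in>T1. 1 / real (m * p ^ a)) + (\<Sum>(m,p,a)\<in>T2. 1 / real (m * p ^ a))"
  proof -
    have "Ts = T1 \<union> T2" "T1 \<inter> T2 = {}" unfolding T1_def T2_def by auto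
    moreover have "finite T1" "finite T2" using finTs unfolding T1_def T2_def by auto
    ultimately show ?thesis by (simp add: sum.union_disjoint)
  qed
  have T1eq: "T1 = (\<lambda>(m,p). (m,p,1::nat)) ` As"
    unfolding T1_def Ts_def As_def by (auto simp: image_iff)
  have sT1: "(\<Sum>(m,p,a)\<in>T1. 1 / real (m * p ^ a)) = prime_sum c \<alpha> N"
    unfolding T1eq psd by (subst sum.reindex) (auto simp: inj_on_def intro!: sum.cong)
  define M where "M = nat \<lfloor>c * L powr \<alpha>\<rfloor>"
  define A where "A = nat \<lfloor>sqrt (c * real N)\<rfloor>"
  define B where "B = nat \<lfloor>log 2 (c * real N)\<rfloor>"
  have T2sub: "T2 \<subseteq> {..M} \<times> {..A} \<times> {..B}"
  proof safe
    fix m p a assume t: "(m, p, a) \<in> T2"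
    then have pr: "prime p" and m1: "m \<ge> 1" and le: "real (m * p ^ a) \<le> c * real N"
      and gy: "real (p ^ a) > y" and a1: "a \<ge> 1" "a \<noteq> 1"
      unfolding T2_def Ts_def by auto
    have "real m * y \<le> real m * real (p ^ a)" using gy m1 by (intro mult_left_mono) auto
    also have "\<dots> \<le> c * real N" using le by simp
    finally have "real m \<le> c * real N / y" using y0 by (simp add: field_simps)
    also have "c * real N / y = c * L powr \<alpha>" unfolding y_def using N0 Lpow by simp
    finally have "int m \<le> \<lfloor>c * L powr \<alpha>\<rfloor>" by (simp add: le_floor_iff)
    then show "m \<le> M" unfolding M_def by simp
    have a2: "a \<ge> 2" using a1 by simp
    have "real (p ^ a) \<le> real (m * p ^ a)" using m1 by (simp only: of_nat_le_iff) simp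
    then have "real (p ^ a) \<le> c * real N" using le by linarith
    from pow_bounds[OF pr a2 this] show "p \<le> A" "a \<le> B" unfolding A_def B_def by auto
  qed
  have cN1: "c * real N \<ge> 1"
  proof -
    have "real N \<ge> 1" using N0 by (cases N) auto
    then show ?thesis using c by (smt (verit) mult_le_cancel_right1)
  qed
  have cardT2: "real (card T2) \<le> (c * L powr \<alpha> + 1) * (sqrt (c * real N) + 1) * (log 2 (c * real N) + 1)"
  proof -
    have "card T2 \<le> card ({..M} \<times> {..A} \<times> {..B})" by (intro card_mono T2sub) auto
    also have "\<dots> = (M + 1) * ((A + 1) * (B + 1))" by (simp add: card_cartesian_product)
    finally have "real (card T2) \<le> (real M + 1) * ((real A + 1) * (real B + 1))"
      by (metis of_nat_le_iff of_nat_mult of_nat_Suc add.commute plus_1_eq_Suc)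
    also have "\<dots> \<le> (c * L powr \<alpha> + 1) * ((sqrt (c * real N) + 1) * (log 2 (c * real N) + 1))"
    proof -
      have "c * L powr \<alpha> \<ge> 0" using c by simp
      then have 1: "real M + 1 \<le> c * L powr \<alpha> + 1" unfolding M_def by (simp add: of_nat_nat)
      have s0: "sqrt (c * real N) \<ge> 0" using cN1 by simp
      then have 2: "real A + 1 \<le> sqrt (c * real N) + 1" unfolding A_def by (simp add: of_nat_nat)
      have l0: "log 2 (c * real N) \<ge> 0" using cN1 by simp
      then have 3: "real B + 1 \<le> log 2 (c * real N) + 1" unfolding B_def by (simp add: of_nat_nat)
      have 4: "(real A + 1) * (real B + 1) \<le> (sqrt (c * real N) + 1) * (log 2 (c * real N) + 1)"
        using 2 3 s0 l0 by (intro mult_mono) auto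
      have 5: "0 \<le> c * L powr \<alpha> + 1" using c by (simp add: add_nonneg_nonneg)
      have 6: "0 \<le> (real A + 1) * (real B + 1)" by simp
      show ?thesis by (rule mult_mono[OF 1 4 5 6])
    qed
    finally show ?thesis by (simp add: mult.assoc)
  qed
  have sT2_nonneg: "(\<Sum>(m,p,a)\<in>T2. 1 / real (m * p ^ a)) \<ge> 0"
    by (intro sum_nonneg) auto
  have "(\<Sum>(m,p,a)\<in>T2. 1 / real (m * p ^ a)) \<le> (\<Sum>t\<in>T2. 1 / real N)"
  proof (intro sum_mono)
    fix t assume t: "t \<in> T2"
    then obtain m p a where tt: "t = (m,p,a)" "real N < real (m * p ^ a)" unfolding T2_def Ts_def by auto
    then show "(case t of (m,p,a) \<Rightarrow> 1 / real (m * p ^ a)) \<le> 1 / real N"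
      using N0 by (simp add: frac_le del: of_nat_mult)
  qed
  also have "\<dots> = real (card T2) / real N" by simp
  also have "\<dots> \<le> (c * L powr \<alpha> + 1) * (sqrt (c * real N) + 1) * (log 2 (c * real N) + 1) / real N"
    using cardT2 N0 by (intro divide_right_mono) auto
  also have "\<dots> \<le> 1 / L" using e5 unfolding L_def .
  finally have sT2: "(\<Sum>(m,p,a)\<in>T2. 1 / real (m * p ^ a)) \<le> 1 / L" .
  have "prime_power_sum c \<alpha> N - prime_sum c \<alpha> N = (\<Sum>(m,p,a)\<in>T2. 1 / real (m * p ^ a))"
    using pps split sT1 by simp
  then show ?thesis using sT2 sT2_nonneg unfolding L_def by simp
qed


theorem lemma2:
  fixes c \<alpha> :: real
  assumes "c > 1" and "\<alpha> > 0"
  shows "(\<lambda>N::nat. prime_power_sum c \<alpha> N - \<alpha> * ln c * ln (ln (real N)) / ln (real N))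
           \<in> O(\<lambda>N. 1 / ln (real N)) \<and>
         (\<lambda>N::nat. prime_sum c \<alpha> N - \<alpha> * ln c * ln (ln (real N)) / ln (real N))
           \<in> O(\<lambda>N. 1 / ln (real N))"
proof -
  define K where "K = 14 * ln c + 16 + c * (ln c + 5)"
  have ev0: "eventually (\<lambda>N::nat. ln (real N) \<ge> 1) at_top" by real_asymp
  have ev1: "eventually (\<lambda>N::nat. real N / ln (real N) powr \<alpha> \<ge> 2) at_top"
    using assms by real_asymp
  have ev2: "eventually (\<lambda>N::nat. \<alpha> * ln (ln (real N)) \<le> ln (real N) / 2) at_top"
    using assms by real_asymp
  have ev3: "eventually (\<lambda>N::nat. \<alpha>^2 * ln (ln (real N))^2 \<le> ln (real N)) at_top"
    using assms by real_asymp
  have ev4: "eventually (\<lambda>N::nat. ln (real N) * (sqrt (real N) + 1) * (log 2 (real N) + 1) / (real N / ln (real N) powr \<alpha>) \<le> 1) at_top"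
    using assms by real_asymp
  have ev5: "eventually (\<lambda>N::nat. (c * ln (real N) powr \<alpha> + 1) * (sqrt (c * real N) + 1) * (log 2 (c * real N) + 1) / real N \<le> 1 / ln (real N)) at_top"
    using assms by real_asymp
  have evA: "eventually (\<lambda>N::nat. \<bar>prime_sum c \<alpha> N - \<alpha> * ln c * ln (ln (real N)) / ln (real N)\<bar>
       \<le> K * \<bar>1 / ln (real N)\<bar> \<and>
     \<bar>prime_power_sum c \<alpha> N - \<alpha> * ln c * ln (ln (real N)) / ln (real N)\<bar>
       \<le> (K + 1) * \<bar>1 / ln (real N)\<bar>) at_top"
    using ev0 ev1 ev2 ev3 ev4 ev5
  proof eventually_elim
    case (elim N)
    have L1: "ln (real N) \<ge> 1" using elim by simp
    have b1: "\<bar>prime_sum c \<alpha> N - \<alpha> * ln c * ln (ln (real N)) / ln (real N)\<bar> \<le> K / ln (real N)"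
      unfolding K_def using prime_sum_bound[OF assms] elim by blast
    have b2: "\<bar>prime_power_sum c \<alpha> N - prime_sum c \<alpha> N\<bar> \<le> 1 / ln (real N)"
      using pps_diff[OF assms] elim by blast
    have ab: "\<bar>1 / ln (real N)\<bar> = 1 / ln (real N)" using L1 by simp
    have k1: "K / ln (real N) = K * (1 / ln (real N))" by simp
    have k2: "(K + 1) * (1 / ln (real N)) = K / ln (real N) + 1 / ln (real N)" by (simp add: add_divide_distrib)
    show ?case unfolding ab using b1 b2 k1 k2 by linarith
  qed
  have 1: "(\<lambda>N::nat. prime_power_sum c \<alpha> N - \<alpha> * ln c * ln (ln (real N)) / ln (real N))
           \<in> O(\<lambda>N. 1 / ln (real N))"
    by (rule bigoI[where c = "K + 1"]) (use evA in \<open>auto elim!: eventually_mono\<close>)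
  have 2: "(\<lambda>N::nat. prime_sum c \<alpha> N - \<alpha> * ln c * ln (ln (real N)) / ln (real N))
           \<in> O(\<lambda>N. 1 / ln (real N))"
    by (rule bigoI[where c = "K"]) (use evA in \<open>auto elim!: eventually_mono\<close>)
  show ?thesis using 1 2 by blast
qed

end
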